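(* Let $G$ be a $(2K_2, K_1+C_4)$-free graph. Then $\chi(G)\le \omega(G)+5$.
   Context: All graphs are finite, simple and undirected. $C_4$ is the cycle on 4 vertices; $2K_2$ is the disjoint union of two edges; $K_1+C_4$ is the graph obtained from $C_4$ by adding a vertex adjacent to all four of its vertices. A graph is $\mathcal F$-free if it has no induced subgraph isomorphic to a member of $\mathcal F$. $\chi$ is the chromatic number and $\omega$ the clique number. *)

theory Defs
  imports Main
begin

definition simple_graph :: "'a set \<Rightarrow> ('a \<Rightarrow> 'a \<Rightarrow> bool) \<Rightarrow> bool" where
  "simple_graph V E \<longleftrightarrow> finite V \<and> (\<forall>u v. E u v \<longrightarrow> u \<in> V \<and> v \<in> V)
     \<and> (\<forall>u v. E u v \<longrightarrow> E v u) \<and> (\<forall>v. \<not> E v v)"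

definition has_induced :: "'a set \<Rightarrow> ('a \<Rightarrow> 'a \<Rightarrow> bool) \<Rightarrow> 'b set \<Rightarrow> ('b \<Rightarrow> 'b \<Rightarrow> bool) \<Rightarrow> bool" where
  "has_induced V E W F \<longleftrightarrow> (\<exists>f. inj_on f W \<and> f ` W \<subseteq> V \<and>
      (\<forall>x\<in>W. \<forall>y\<in>W. E (f x) (f y) \<longleftrightarrow> F x y))"

definition twoK2_edges :: "nat \<Rightarrow> nat \<Rightarrow> bool" where
  "twoK2_edges x y \<longleftrightarrow> {x, y} = {0, 1} \<or> {x, y} = {2, 3}"

definition K1C4_edges :: "nat \<Rightarrow> nat \<Rightarrow> bool" where
  "K1C4_edges x y \<longleftrightarrow> {x, y} = {0, 1} \<or> {x, y} = {1, 2} \<or> {x, y} = {2, 3} \<or> {x, y} = {3, 0}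
     \<or> {x, y} = {4, 0} \<or> {x, y} = {4, 1} \<or> {x, y} = {4, 2} \<or> {x, y} = {4, 3}"

definition is_clique :: "'a set \<Rightarrow> ('a \<Rightarrow> 'a \<Rightarrow> bool) \<Rightarrow> 'a set \<Rightarrow> bool" where
  "is_clique V E K \<longleftrightarrow> K \<subseteq> V \<and> (\<forall>u\<in>K. \<forall>v\<in>K. u \<noteq> v \<longrightarrow> E u v)"

definition clique_number :: "'a set \<Rightarrow> ('a \<Rightarrow> 'a \<Rightarrow> bool) \<Rightarrow> nat" where
  "clique_number V E = Max {card K | K. is_clique V E K}"

definition proper_colouring :: "'a set \<Rightarrow> ('a \<Rightarrow> 'a \<Rightarrow> bool) \<Rightarrow> nat \<Rightarrow> ('a \<Rightarrow> nat) \<Rightarrow> bool" where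
  "proper_colouring V E k c \<longleftrightarrow> (\<forall>v\<in>V. c v < k) \<and> (\<forall>u\<in>V. \<forall>v\<in>V. E u v \<longrightarrow> c u \<noteq> c v)"

definition chromatic_number :: "'a set \<Rightarrow> ('a \<Rightarrow> 'a \<Rightarrow> bool) \<Rightarrow> nat" where
  "chromatic_number V E = (LEAST k. \<exists>c. proper_colouring V E k c)"

end

theory Submission
  imports Defs
begin

lemma sg_facts:
  assumes "simple_graph V E"
  shows "finite V" "\<And>u v. E u v \<Longrightarrow> E v u" "\<And>v. \<not> E v v" "\<And>u v. E u v \<Longrightarrow> u \<in> V"
  using assms unfolding simple_graph_def by blast+

lemma twoK2_witness:
  assumes sg: "simple_graph V E"
    and V: "a \<in> V" "b \<in> V" "c \<in> V" "d \<in> V"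
    and e: "E a b" "E c d" "\<not> E a c" "\<not> E a d" "\<not> E b c" "\<not> E b d"
  shows "has_induced V E {0::nat..3} twoK2_edges"
proof -
  note sym = sg_facts(2)[OF sg] and irr = sg_facts(3)[OF sg]
  have dist: "a \<noteq> b" "a \<noteq> c" "a \<noteq> d" "b \<noteq> c" "b \<noteq> d" "c \<noteq> d"
    using e irr sym by metis+
  define f where "f = (\<lambda>i::nat. if i=0 then a else if i=1 then b else if i=2 then c else d)"
  have U: "{0::nat..3} = {0,1,2,3}" by auto
  have "inj_on f {0::nat..3}" unfolding U f_def inj_on_def using dist by auto
  moreover have "f ` {0::nat..3} \<subseteq> V" unfolding U f_def using V by auto
  moreover have "\<forall>x\<in>{0::nat..3}. \<forall>y\<in>{0..3}. E (f x) (f y) \<longleftrightarrow> twoK2_edges x y"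
    proof -
    have e2: "E b a" "E d c" "\<not> E c a" "\<not> E d a" "\<not> E c b" "\<not> E d b" using e sym by blast+
    show ?thesis unfolding U f_def twoK2_edges_def by (simp add: doubleton_eq_iff e e2 irr)
  qed
  ultimately show ?thesis unfolding has_induced_def by blast
qed

lemma W4_witness:
  assumes sg: "simple_graph V E"
    and V: "u \<in> V" "k1 \<in> V" "k2 \<in> V" "w \<in> V" "k \<in> V"
    and e: "E u k1" "E k1 k2" "E k2 w" "E w u" "E k u" "E k k1" "E k k2" "E k w"
      "\<not> E u k2" "\<not> E k1 w"
    and d: "u \<noteq> k2" "k1 \<noteq> w"
  shows "has_induced V E {0::nat..4} K1C4_edges"
proof -
  note sym = sg_facts(2)[OF sg] and irr = sg_facts(3)[OF sg]
  have dist: "u \<noteq> k1" "u \<noteq> w" "u \<noteq> k" "k1 \<noteq> k2" "k1 \<noteq> k" "k2 \<noteq> w" "k2 \<noteq> k" "w \<noteq> k"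
    using e irr sym by metis+
  define f where "f = (\<lambda>i::nat. if i=0 then u else if i=1 then k1 else if i=2 then k2
     else if i = 3 then w else k)"
  have U: "{0::nat..4} = {0,1,2,3,4}" by auto
  have "inj_on f {0::nat..4}" unfolding U f_def inj_on_def using dist d by auto
  moreover have "f ` {0::nat..4} \<subseteq> V" unfolding U f_def using V by auto
  moreover have "\<forall>x\<in>{0::nat..4}. \<forall>y\<in>{0..4}. E (f x) (f y) \<longleftrightarrow> K1C4_edges x y"
    proof -
    have e2: "E k1 u" "E k2 k1" "E w k2" "E u w" "E u k" "E k1 k" "E k2 k" "E w k" "\<not> E k2 u" "\<not> E w k1"
      using e sym by blast+
    show ?thesis unfolding U f_def K1C4_edges_def by (simp add: doubleton_eq_iff e e2 irr)
  qed
  ultimately show ?thesis unfolding has_induced_def by blast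
qed

lemma clique_facts:
  assumes "simple_graph V E"
  shows "\<exists>K. is_clique V E K \<and> card K = clique_number V E"
    and "\<And>K. is_clique V E K \<Longrightarrow> card K \<le> clique_number V E"
proof -
  let ?S = "{card K | K. is_clique V E K}"
  have fin: "finite V" using sg_facts(1)[OF assms] .
  have sub: "?S \<subseteq> {..card V}"
  proof
    fix n assume "n \<in> ?S"
    then obtain K where "n = card K" "K \<subseteq> V" unfolding is_clique_def by blast
    thus "n \<in> {..card V}" using card_mono[OF fin] by simp
  qed
  have finS: "finite ?S" by (rule finite_subset[OF sub]) simp
  have "is_clique V E {}" unfolding is_clique_def by simp
  hence ne: "?S \<noteq> {}" by blast
  show "\<exists>K. is_clique V E K \<and> card K = clique_number V E"
    using Max_in[OF finS ne] unfolding clique_number_def by auto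
  show "\<And>K. is_clique V E K \<Longrightarrow> card K \<le> clique_number V E"
    unfolding clique_number_def using Max_ge[OF finS] by blast
qed

lemma col_union:
  assumes "proper_colouring A E a c1" "proper_colouring B E b c2"
  shows "proper_colouring (A \<union> B) E (a+b) (\<lambda>v. if v \<in> A then c1 v else a + c2 v)"
  unfolding proper_colouring_def
proof (intro conjI ballI impI)
  fix v assume "v \<in> A \<union> B"
  thus "(if v \<in> A then c1 v else a + c2 v) < a + b"
    using assms unfolding proper_colouring_def by auto
next
  fix u v assume "u \<in> A \<union> B" "v \<in> A \<union> B" "E u v"
  thus "(if u \<in> A then c1 u else a + c2 u) \<noteq> (if v \<in> A then c1 v else a + c2 v)"
    using assms unfolding proper_colouring_def by (cases "u \<in> A"; cases "v \<in> A"; force)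
qed

lemma col_mono:
  assumes "proper_colouring A E k c" "B \<subseteq> A" "k \<le> k'"
  shows "proper_colouring B E k' c"
  using assms unfolding proper_colouring_def by (meson order_less_le_trans subsetD)

lemma indep_col:
  assumes "\<forall>u\<in>A. \<forall>v\<in>A. \<not> E u v"
  shows "proper_colouring A E 1 (\<lambda>_. 0)"
  using assms unfolding proper_colouring_def by auto

lemma split_col:
  assumes sg: "simple_graph V E" and n2: "\<not> has_induced V E {0::nat..3} twoK2_edges"
    and W: "W \<subseteq> V" and xy: "x \<in> W" "y \<in> W" "E x y"
    and c1: "proper_colouring {z\<in>W. E x z} E a c1"
    and c2: "proper_colouring {z\<in>W. E y z} E b c2"
  shows "\<exists>c. proper_colouring W E (a+b+1) c"
proof -
  note sym = sg_facts(2)[OF sg]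
  let ?C = "W - {z. E x z} - {z. E y z}"
  have ind: "\<forall>u\<in>?C. \<forall>v\<in>?C. \<not> E u v"
  proof (intro ballI notI)
    fix u v assume u: "u \<in> ?C" and v: "v \<in> ?C" and uv: "E u v"
    have "has_induced V E {0::nat..3} twoK2_edges"
      apply (rule twoK2_witness[OF sg, of u v x y])
      using u v uv xy W sym by blast+
    with n2 show False by simp
  qed
  have eq: "W = ({z\<in>W. E x z} \<union> {z\<in>W. E y z}) \<union> ?C" by auto
  show ?thesis using col_union[OF col_union[OF c1 c2] indep_col[OF ind]] 
    by (subst eq) blast
qed

lemma trifree_col:
  assumes sg: "simple_graph V E" and n2: "\<not> has_induced V E {0::nat..3} twoK2_edges"
    and W: "W \<subseteq> V"
    and tf: "\<And>a b c. a\<in>W \<Longrightarrow> b\<in>W \<Longrightarrow> c\<in>W \<Longrightarrow> E a b \<Longrightarrow> E b c \<Longrightarrow> E a c \<Longrightarrow> False"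
  shows "\<exists>c. proper_colouring W E 3 c"
proof (cases "\<exists>x\<in>W. \<exists>y\<in>W. E x y")
  case True
  then obtain x y where xy: "x \<in> W" "y \<in> W" "E x y" by blast
  note sym = sg_facts(2)[OF sg]
  have c1: "proper_colouring {z\<in>W. E x z} E 1 (\<lambda>_. 0)"
    by (rule indep_col) (use tf xy in blast)
  have c2: "proper_colouring {z\<in>W. E y z} E 1 (\<lambda>_. 0)"
    by (rule indep_col) (use tf xy sym in blast)
  from split_col[OF sg n2 W xy c1 c2] obtain c where "proper_colouring W E (1+1+1) c" by blast
  moreover have "(1::nat)+1+1 = 3" by simp
  ultimately show ?thesis by metis
next
  case False
  hence "proper_colouring W E 1 (\<lambda>_. 0)" by (intro indep_col) blast
  thus ?thesis using col_mono[of W E 1 _ W 3] by auto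
qed

lemma chrom_le:
  assumes "proper_colouring V E k c"
  shows "chromatic_number V E \<le> k"
  unfolding chromatic_number_def by (rule Least_le) (use assms in blast)

theorem corollary3p4:
  fixes V :: "'a set" and E :: "'a \<Rightarrow> 'a \<Rightarrow> bool"
  assumes "simple_graph V E"
    and "\<not> has_induced V E {0::nat..3} twoK2_edges"
    and "\<not> has_induced V E {0::nat..4} K1C4_edges"
  shows "chromatic_number V E \<le> clique_number V E + 5"
proof -
  note sg = assms(1) and n2 = assms(2) and n4 = assms(3)
  note fin = sg_facts(1)[OF sg] and sym = sg_facts(2)[OF sg] and irr = sg_facts(3)[OF sg]
    and inV = sg_facts(4)[OF sg]
  have inV2: "\<And>u v. E u v \<Longrightarrow> v \<in> V" using inV sym by blast
  define w where "w = clique_number V E"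
  obtain K where K: "is_clique V E K" "card K = w" using clique_facts(1)[OF sg] w_def by blast
  have maxc: "\<And>K'. is_clique V E K' \<Longrightarrow> card K' \<le> w" using clique_facts(2)[OF sg] w_def by blast
  have KV: "K \<subseteq> V" and Kc: "\<And>a b. a \<in> K \<Longrightarrow> b \<in> K \<Longrightarrow> a \<noteq> b \<Longrightarrow> E a b"
    using K(1) unfolding is_clique_def by auto
  have finK: "finite K" using KV fin finite_subset by blast
  have tri3: "3 \<le> w" if "a \<in> V" "b \<in> V" "c \<in> V" "E a b" "E b c" "E a c" for a b c
  proof -
    have d: "a \<noteq> b" "b \<noteq> c" "a \<noteq> c" using that irr by metis+
    have "is_clique V E {a,b,c}" using that sym unfolding is_clique_def by auto
    moreover have "card {a,b,c} = 3" using d by simp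
    ultimately show ?thesis using maxc by metis
  qed
  have tri4: "4 \<le> w" if "x \<in> V" "a \<in> V" "b \<in> V" "c \<in> V" "E a b" "E b c" "E a c"
     "E x a" "E x b" "E x c" for x a b c
  proof -
    have d: "a \<noteq> b" "b \<noteq> c" "a \<noteq> c" "x \<noteq> a" "x \<noteq> b" "x \<noteq> c" using that irr by metis+
    have "is_clique V E {x,a,b,c}" using that sym unfolding is_clique_def by auto
    moreover have "card {x,a,b,c} = 4" using d by simp
    ultimately show ?thesis using maxc by metis
  qed
  show ?thesis
  proof (cases "w \<le> 2")
    case True
    have "\<exists>c. proper_colouring V E 3 c"
    proof (rule trifree_col[OF sg n2 subset_refl])
      fix a b c assume "a \<in> V" "b \<in> V" "c \<in> V" "E a b" "E b c" "E a c"
      from tri3[OF this] True show False by simp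
    qed
    then obtain c where "proper_colouring V E 3 c" by blast
    hence "chromatic_number V E \<le> 3" by (rule chrom_le)
    thus ?thesis unfolding w_def by simp
  next
    case False
    show ?thesis
    proof (cases "w = 3")
      case True
      have "\<not> card K \<le> Suc 0" using K(2) True by simp
      then obtain x y where xy: "x \<in> K" "y \<in> K" "x \<noteq> y"
        using card_le_Suc0_iff_eq[OF finK] by blast
      have exy: "E x y" using Kc xy by blast
      have xyV: "x \<in> V" "y \<in> V" using xy KV by auto
      have tfx: "\<And>z. z \<in> V \<Longrightarrow> \<exists>c. proper_colouring {u\<in>V. E z u} E 3 c"
      proof -
        fix z assume zV: "z \<in> V"
        show "\<exists>c. proper_colouring {u\<in>V. E z u} E 3 c"
        proof (rule trifree_col[OF sg n2])
          show "{u\<in>V. E z u} \<subseteq> V" by blast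
        next
          fix a b c assume "a \<in> {u\<in>V. E z u}" "b \<in> {u\<in>V. E z u}" "c \<in> {u\<in>V. E z u}"
            "E a b" "E b c" "E a c"
          hence "4 \<le> w" using tri4[OF zV] by blast
          thus False using True by simp
        qed
      qed
      obtain c1 where c1: "proper_colouring {u\<in>V. E x u} E 3 c1" using tfx xyV by blast
      obtain c2 where c2: "proper_colouring {u\<in>V. E y u} E 3 c2" using tfx xyV by blast
      obtain c where "proper_colouring V E (3+3+1) c"
        using split_col[OF sg n2 subset_refl xyV exy c1 c2] by blast
      hence "chromatic_number V E \<le> 3+3+1" by (rule chrom_le)
      thus ?thesis using True unfolding w_def by simp
    next
      case False
      hence w4: "4 \<le> w" using \<open>\<not> w \<le> 2\<close> by simp
      define S where "S u = {k\<in>K. \<not> E u k}" for u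
      have SK: "S u \<subseteq> K" for u unfolding S_def by auto
      have Sfin: "finite (S u)" for u using SK finK finite_subset by blast
      have Sne: "S u \<noteq> {}" if u: "u \<in> V" "u \<notin> K" for u
      proof
        assume "S u = {}"
        hence all: "\<And>k. k \<in> K \<Longrightarrow> E u k" unfolding S_def by auto
        have "is_clique V E (insert u K)" using K(1) u all sym unfolding is_clique_def by auto
        moreover have "card (insert u K) = w + 1" using u finK K(2) by simp
        ultimately show False using maxc[of "insert u K"] by simp
      qed
      define T where "T = {u \<in> V - K. card (S u) = 1}"
      define R where "R = {u \<in> V - K. card (S u) \<noteq> 1}"
      have R2: "2 \<le> card (S u)" if "u \<in> R" for u
      proof -
        have "card (S u) \<noteq> 0" using Sne[of u] that Sfin[of u] unfolding R_def by auto
        thus ?thesis using that unfolding R_def by auto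
      qed
      obtain h where h: "bij_betw h K {0..<w}" using ex_bij_betw_finite_nat[OF finK] K(2) by auto
      have hinj: "inj_on h K" and hK: "\<And>k. k \<in> K \<Longrightarrow> h k < w"
        using h unfolding bij_betw_def by auto
      have Tsing: "\<exists>x. S u = {x}" if "u \<in> T" for u
        using that card_1_singleton_iff unfolding T_def by auto
      define col where "col v = (if v \<in> K then h v else h (the_elem (S v)))" for v
      have colT: "col v = h x" if "v \<in> T" "S v = {x}" for v x
        using that unfolding col_def T_def by auto
      have c1: "proper_colouring (K \<union> T) E w col"
        unfolding proper_colouring_def
      proof (intro conjI ballI impI)
        fix v assume "v \<in> K \<union> T"
        then show "col v < w"
        proof
          assume "v \<in> K" thus ?thesis using hK unfolding col_def by simp
        next
          assume vT: "v \<in> T"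
          then obtain x where "S v = {x}" using Tsing by blast
          moreover have "x \<in> K" using SK calculation by auto
          ultimately show ?thesis using colT vT hK by simp
        qed
      next
        fix u v assume u: "u \<in> K \<union> T" and v: "v \<in> K \<union> T" and uv: "E u v"
        have TK: "t \<notin> K" if "t \<in> T" for t using that unfolding T_def by auto
        have TV: "t \<in> V" if "t \<in> T" for t using that unfolding T_def by auto
        show "col u \<noteq> col v"
        proof (cases "u \<in> K")
          case uK: True
          show ?thesis
          proof (cases "v \<in> K")
            case True
            have "u \<noteq> v" using uv irr by metis
            thus ?thesis using uK True hinj unfolding col_def inj_on_def by auto
          next
            case False
            hence vT: "v \<in> T" using v by auto
            then obtain x where Sx: "S v = {x}" using Tsing by blast
            have xK: "x \<in> K" using SK Sx by auto
            have "u \<notin> S v" using uv sym unfolding S_def by auto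
            hence "u \<noteq> x" using Sx by auto
            hence "h u \<noteq> h x" using hinj uK xK unfolding inj_on_def by auto
            thus ?thesis using colT[OF vT Sx] uK unfolding col_def by simp
          qed
        next
          case uK: False
          hence uT: "u \<in> T" using u by auto
          then obtain x where Sx: "S u = {x}" using Tsing by blast
          have xK: "x \<in> K" using SK Sx by auto
          show ?thesis
          proof (cases "v \<in> K")
            case True
            have "v \<notin> S u" using uv unfolding S_def by auto
            hence "v \<noteq> x" using Sx by auto
            hence "h v \<noteq> h x" using hinj True xK unfolding inj_on_def by auto
            thus ?thesis using colT[OF uT Sx] True unfolding col_def by simp
          next
            case False
            hence vT: "v \<in> T" using v by auto
            then obtain x' where Sx': "S v = {x'}" using Tsing by blast
            have x'K: "x' \<in> K" using SK Sx' by auto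
            show ?thesis
            proof
              assume "col u = col v"
              hence "h x = h x'" using colT[OF uT Sx] colT[OF vT Sx'] by simp
              hence xx: "x = x'" using hinj xK x'K unfolding inj_on_def by auto
              have au: "E u k" if "k \<in> K" "k \<noteq> x" for k
                using that Sx unfolding S_def by auto
              have av: "E v k" if "k \<in> K" "k \<noteq> x" for k
                using that Sx' xx unfolding S_def by auto
              have uvd: "u \<noteq> v" using uv irr by metis
              have "is_clique V E (insert u (insert v (K - {x})))"
                unfolding is_clique_def
              proof (intro conjI ballI impI)
                show "insert u (insert v (K - {x})) \<subseteq> V" using KV TV uT vT by auto
              next
                fix a b assume a: "a \<in> insert u (insert v (K - {x}))"
                  and b: "b \<in> insert u (insert v (K - {x}))" and ab: "a \<noteq> b"
                show "E a b" using a b ab au av uv sym Kc by auto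
              qed
              moreover have "card (insert u (insert v (K - {x}))) = w + 1"
              proof -
                have "card (K - {x}) = w - 1" using K(2) xK finK by simp
                moreover have "w \<ge> 1" using w4 by simp
                ultimately show ?thesis using uvd TK[OF uT] TK[OF vT] finK by simp
              qed
              ultimately show False using maxc[of "insert u (insert v (K - {x}))"] by simp
            qed
          qed
        qed
      qed
      have key: "card (S u) + card (S v) \<le> w + 1 \<and> (K - S u) \<inter> (K - S v) = {}"
        if u: "u \<in> R" and v: "v \<in> R" and uv: "E u v" for u v
      proof -
        have uV: "u \<in> V" "u \<notin> K" and vV: "v \<in> V" "v \<notin> K" using u v unfolding R_def by auto
        have int1: "card (S u \<inter> S v) \<le> 1"
        proof (rule ccontr)
          assume "\<not> card (S u \<inter> S v) \<le> 1"
          then obtain a b where ab: "a \<in> S u \<inter> S v" "b \<in> S u \<inter> S v" "a \<noteq> b"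
            using card_le_Suc0_iff_eq[of "S u \<inter> S v"] Sfin by auto
          have "has_induced V E {0::nat..3} twoK2_edges"
            apply (rule twoK2_witness[OF sg, of u v a b])
            using ab uV vV uv Kc KV unfolding S_def by auto
          with n2 show False by simp
        qed
        have disj: "(K - S u) \<inter> (K - S v) = {}"
        proof (rule ccontr)
          assume "(K - S u) \<inter> (K - S v) \<noteq> {}"
          then obtain k where k: "k \<in> K" "E u k" "E v k" unfolding S_def by auto
          have "\<not> S v \<subseteq> S u"
          proof
            assume "S v \<subseteq> S u"
            hence "S u \<inter> S v = S v" by auto
            thus False using int1 R2[OF v] by simp
          qed
          then obtain k1 where k1: "k1 \<in> S v" "k1 \<notin> S u" by auto
          have "\<not> S u \<subseteq> S v"
          proof
            assume "S u \<subseteq> S v"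
            hence "S u \<inter> S v = S u" by auto
            thus False using int1 R2[OF u] by simp
          qed
          then obtain k2 where k2: "k2 \<in> S u" "k2 \<notin> S v" by auto
          have k1': "k1 \<in> K" "\<not> E v k1" "E u k1" using k1 unfolding S_def by auto
          have k2': "k2 \<in> K" "\<not> E u k2" "E v k2" using k2 unfolding S_def by auto
          have "has_induced V E {0::nat..4} K1C4_edges"
          proof (rule W4_witness[OF sg, of u k1 k2 v k])
            show "u \<in> V" "k1 \<in> V" "k2 \<in> V" "v \<in> V" "k \<in> V" using uV vV k1' k2' k KV by auto
            show "E u k1" "\<not> E u k2" using k1' k2' by auto
            show "E k1 k2" using Kc k1' k2' by metis
            show "E k2 v" "E v u" "E k u" "E k v" "\<not> E k1 v" using k1' k2' k uv sym by metis+
            show "E k k1" using Kc k k1' by metis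
            show "E k k2" using Kc k k2' by metis
            show "u \<noteq> k2" "k1 \<noteq> v" using uV vV k1' k2' by auto
          qed
          with n4 show False by simp
        qed
        have "S u \<union> S v = K" using disj SK by blast
        hence "card (S u) + card (S v) = w + card (S u \<inter> S v)"
          using card_Un_Int[OF Sfin Sfin] K(2) by simp
        thus ?thesis using int1 disj by simp
      qed
      have Rtf: False if "a \<in> R" "b \<in> R" "c \<in> R" "E a b" "E b c" "E a c" for a b c
      proof -
        have kab: "card (S a) + card (S b) \<le> w + 1" "(K - S a) \<inter> (K - S b) = {}"
          using key[of a b] that by auto
        have kbc: "card (S b) + card (S c) \<le> w + 1" "(K - S b) \<inter> (K - S c) = {}"
          using key[of b c] that by auto
        have kac: "card (S a) + card (S c) \<le> w + 1" "(K - S a) \<inter> (K - S c) = {}"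
          using key[of a c] that by auto
        have cn: "card (K - S x) + card (S x) = w" for x
          using card_Diff_subset[OF Sfin SK] card_mono[OF finK SK] K(2) by (metis le_add_diff_inverse2)
        have "card ((K - S a) \<union> (K - S b) \<union> (K - S c)) = card (K - S a) + card (K - S b) + card (K - S c)"
          using kab kbc kac finK by (simp add: card_Un_disjoint Int_Un_distrib2)
        moreover have "card ((K - S a) \<union> (K - S b) \<union> (K - S c)) \<le> w"
          using card_mono[OF finK] K(2) by (metis Diff_subset Un_least)
        ultimately show False using cn[of a] cn[of b] cn[of c] kab(1) kbc(1) kac(1) w4 by linarith
      qed
      obtain c2 where c2: "proper_colouring R E 3 c2"
        using trifree_col[OF sg n2, of R] Rtf unfolding R_def by blast
      have "V = (K \<union> T) \<union> R" using KV unfolding T_def R_def by auto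
      hence "\<exists>c. proper_colouring V E (w + 3) c" using col_union[OF c1 c2] by metis
      then obtain c where "proper_colouring V E (w + 3) c" by blast
      hence "chromatic_number V E \<le> w + 3" by (rule chrom_le)
      thus ?thesis unfolding w_def by simp
    qed
  qed
qed

end
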